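(* (a) Let $T_1,\dots,T_n$ be nonvertical affine hyperplanes ($d$-dimensional affine subspaces) of $\mathbb{E}^{d+1}$, no two parallel, and for $i<j$ let $h_{ij}$ be the vertical projection into $\mathbb{E}^d$ of $T_i\cap T_j$. For each $i$ let $Q_i\in\mathbb{E}^d$ be the point such that $Q_i^*$ is the unique point at which a translate of $T_i$ is tangent to $S$. Then $\{h_{ij}\}$ is the Pythagorean arrangement $\mathcal{H}(\Psi;Q_1,\dots,Q_n)$ for some balanced, complete real, additive gain graph $\Psi$ on $\{1,\dots,n\}$. (b) Conversely, let $\Phi$ be a balanced, complete real, additive gain graph on $n$ vertices and let $Q_1,\dots,Q_n$ be distinct points of $\mathbb{E}^d$. Then there exist affine hyperplanes $T_1,\dots,T_n$ of $\mathbb{E}^{d+1}$ such that $\mathcal{H}(\Phi;Q_1,\dots,Q_n)$ equals the arrangement $\{h_{ij}\}$ derived from $T_1,\dots,T_n$ as in (a).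
   Context: $\mathbb{E}^d$ is embedded in $\mathbb{E}^{d+1}$ as $\{z=0\}$, where points of $\mathbb{E}^{d+1}$ have coordinates $(x_1,\dots,x_d,z)$. The fundamental paraboloid is $S:\ z=x_1^2+\cdots+x_d^2$. For $P\in\mathbb{E}^d$, $P^*$ is its vertical projection (lift) into $S$; vertical projection into $\mathbb{E}^d$ forgets $z$. A real, additive gain graph on $\{1,\dots,n\}$: finite graph (multiple edges allowed, every edge with two distinct endpoints) with gains $\phi(e;i,j)\in\mathbb{R}$, $\phi(e;j,i)=-\phi(e;i,j)$; it is balanced if every circle has gain sum $0$ read consistently, and complete if every two vertices are adjacent. With $\psi_{ij}(P)=d(P,Q_i)^2-d(P,Q_j)^2$, the Pythagorean arrangement $\mathcal{H}(\Phi;\mathbf{Q})$ consists of the hyperplanes $h(e)=\{P\in\mathbb{E}^d:\psi_{ij}(P)=\phi(e;i,j)\}$, one per edge $e$ with endpoints $i,j$. *)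

theory Defs
  imports "HOL-Analysis.Analysis"
begin

text \<open>Points of E^d are \<open>real^'d\<close>; points of E^(d+1) are pairs \<open>(x, z)\<close> with
  \<open>x :: real^'d\<close> and \<open>z :: real\<close>.  Vertices of gain graphs are \<open>{1..n}\<close>.\<close>

type_synonym ('d) pt = "real^('d::finite)"
type_synonym ('d) upt = "(real^('d::finite)) \<times> real"

definition lift :: "('d::finite) pt \<Rightarrow> ('d::finite) upt" where
  "lift P = (P, (norm P)^2)"

definition paraboloid :: "('d::finite) upt set" where
  "paraboloid = {(x, z). z = (norm x)^2}"

definition affine_hyperplane :: "('d::finite) upt set \<Rightarrow> bool" where
  "affine_hyperplane T \<longleftrightarrow> affine T \<and> aff_dim T = int CARD('d)"

definition nonvertical :: "('d::finite) upt set \<Rightarrow> bool" where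
  "nonvertical T \<longleftrightarrow> (\<forall>p\<in>T. \<forall>t::real. (fst p, snd p + t) \<in> T \<longrightarrow> t = 0)"

definition translate :: "('d::finite) upt \<Rightarrow> ('d::finite) upt set \<Rightarrow> ('d::finite) upt set" where
  "translate v T = (\<lambda>p. p + v) ` T"

definition parallel :: "('d::finite) upt set \<Rightarrow> ('d::finite) upt set \<Rightarrow> bool" where
  "parallel T U \<longleftrightarrow> (\<exists>v. U = translate v T)"

definition tangent_hyperplane :: "('d::finite) pt \<Rightarrow> ('d::finite) upt set" where
  "tangent_hyperplane Q = {(x, z). z = (norm Q)^2 + 2 * (Q \<bullet> (x - Q))}"

definition tangent_point :: "('d::finite) upt set \<Rightarrow> ('d::finite) pt \<Rightarrow> bool" where
  "tangent_point T Q \<longleftrightarrow> lift Q \<in> paraboloid \<and> (\<exists>v. translate v T = tangent_hyperplane Q)"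

definition vproj :: "('d::finite) upt set \<Rightarrow> ('d::finite) pt set" where
  "vproj A = fst ` A"

definition derived_arrangement :: "nat \<Rightarrow> (nat \<Rightarrow> ('d::finite) upt set) \<Rightarrow> ('d::finite) pt set set" where
  "derived_arrangement n T =
     {vproj (T i \<inter> T j) | i j. 1 \<le> i \<and> i < j \<and> j \<le> n}"

text \<open>Gain graphs: edge set \<open>E\<close>, each edge \<open>e\<close> has an ordered pair of endpoints
  \<open>ends e = (i, j)\<close> and gain \<open>g e = \<phi>(e;i,j)\<close>; then \<open>\<phi>(e;j,i) = - g e\<close>.\<close>
definition gain_graph :: "nat \<Rightarrow> 'e set \<Rightarrow> ('e \<Rightarrow> nat \<times> nat) \<Rightarrow> bool" where
  "gain_graph n E ends \<longleftrightarrow> finite E \<and>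
     (\<forall>e\<in>E. fst (ends e) \<noteq> snd (ends e) \<and> fst (ends e) \<in> {1..n} \<and> snd (ends e) \<in> {1..n})"

definition joins :: "('e \<Rightarrow> nat \<times> nat) \<Rightarrow> 'e \<Rightarrow> nat \<Rightarrow> nat \<Rightarrow> bool" where
  "joins ends e i j \<longleftrightarrow> ends e = (i, j) \<or> ends e = (j, i)"

definition gain :: "('e \<Rightarrow> nat \<times> nat) \<Rightarrow> ('e \<Rightarrow> real) \<Rightarrow> 'e \<Rightarrow> nat \<Rightarrow> nat \<Rightarrow> real" where
  "gain ends g e i j = (if ends e = (i, j) then g e else if ends e = (j, i) then - g e else 0)"

definition is_circle :: "'e set \<Rightarrow> ('e \<Rightarrow> nat \<times> nat) \<Rightarrow> nat list \<Rightarrow> 'e list \<Rightarrow> bool" where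
  "is_circle E ends vs es \<longleftrightarrow> length es = length vs \<and> 2 \<le> length vs \<and>
     distinct vs \<and> distinct es \<and> set es \<subseteq> E \<and>
     (\<forall>k < length vs. joins ends (es ! k) (vs ! k) (vs ! (Suc k mod length vs)))"

definition balanced :: "'e set \<Rightarrow> ('e \<Rightarrow> nat \<times> nat) \<Rightarrow> ('e \<Rightarrow> real) \<Rightarrow> bool" where
  "balanced E ends g \<longleftrightarrow> (\<forall>vs es. is_circle E ends vs es \<longrightarrow>
     (\<Sum>k < length vs. gain ends g (es ! k) (vs ! k) (vs ! (Suc k mod length vs))) = 0)"

definition complete_gg :: "nat \<Rightarrow> 'e set \<Rightarrow> ('e \<Rightarrow> nat \<times> nat) \<Rightarrow> bool" where
  "complete_gg n E ends \<longleftrightarrow> (\<forall>i\<in>{1..n}. \<forall>j\<in>{1..n}. i \<noteq> j \<longrightarrow> (\<exists>e\<in>E. joins ends e i j))"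

definition psi :: "(nat \<Rightarrow> ('d::finite) pt) \<Rightarrow> nat \<Rightarrow> nat \<Rightarrow> ('d::finite) pt \<Rightarrow> real" where
  "psi Q i j P = (dist P (Q i))^2 - (dist P (Q j))^2"

definition pyth_arrangement :: "'e set \<Rightarrow> ('e \<Rightarrow> nat \<times> nat) \<Rightarrow> ('e \<Rightarrow> real) \<Rightarrow> (nat \<Rightarrow> ('d::finite) pt) \<Rightarrow> ('d::finite) pt set set" where
  "pyth_arrangement E ends g Q =
     {{P. psi Q (fst (ends e)) (snd (ends e)) P = g e} | e. e \<in> E}"

end

theory Submission imports Defs begin
definition hp :: "('d::finite) pt \<Rightarrow> real \<Rightarrow> ('d::finite) upt set" where
  "hp Q k = {(x, z). z = 2 * (Q \<bullet> x) - (norm Q)^2 + k}"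

lemma hp_img: "hp Q k = (+) (0, k - (norm Q)^2) ` ((\<lambda>x. (x, 2 * (Q \<bullet> x))) ` UNIV)"
  unfolding hp_def by (auto simp: image_iff)

lemma lin: "linear (\<lambda>x::real^'d. (x, 2 * (Q \<bullet> x)))"
  by (rule linearI) (auto simp: inner_add_right algebra_simps)

lemma injL: "inj (\<lambda>x::real^'d. (x, 2 * (Q \<bullet> x)))"
  by (auto simp: inj_on_def)

lemma hp_affine: "affine (hp (Q::('d::finite) pt) k)"
  unfolding affine_def hp_def
proof (clarsimp)
  fix x z x' z' and u v :: real
  assume "u + v = 1"
  then have v: "v = 1 - u" by simp
  show "u * (2 * (Q \<bullet> x) - (norm Q)\<^sup>2 + k) + v * (2 * (Q \<bullet> x') - (norm Q)\<^sup>2 + k) =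
       2 * (Q \<bullet> (u *\<^sub>R x + v *\<^sub>R x')) - (norm Q)\<^sup>2 + k"
    unfolding v by (simp add: inner_add_right algebra_simps)
qed

lemma hp_aff: "affine_hyperplane (hp (Q::('d::finite) pt) k)"
  unfolding affine_hyperplane_def
proof
  show "affine (hp Q k)" by (rule hp_affine)
  show "aff_dim (hp Q k) = int CARD('d)"
    unfolding hp_img by (simp add: aff_dim_translation_eq lin injL)
qed

lemma hp_nonvertical: "nonvertical (hp Q k)"
  unfolding nonvertical_def hp_def by auto

lemma hp_tangent: "tangent_point (hp Q k) Q"
  unfolding tangent_point_def
proof
  show "lift Q \<in> paraboloid" by (simp add: lift_def paraboloid_def)
  have "translate (0, -k) (hp Q k) = tangent_hyperplane Q"
  proof (rule set_eqI)
    fix p :: "('a) upt"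
    obtain x z where p: "p = (x, z)" by (cases p)
    show "p \<in> translate (0, -k) (hp Q k) \<longleftrightarrow> p \<in> tangent_hyperplane Q"
    proof
      assume "p \<in> translate (0, -k) (hp Q k)"
      then obtain x' z' where "(x', z') \<in> hp Q k" "p = (x', z') + (0, -k)"
        unfolding translate_def by auto
      then show "p \<in> tangent_hyperplane Q"
        by (simp add: hp_def tangent_hyperplane_def inner_diff_right power2_norm_eq_inner)
    next
      assume "p \<in> tangent_hyperplane Q"
      then have "(x, z + k) \<in> hp Q k"
        by (simp add: p hp_def tangent_hyperplane_def inner_diff_right power2_norm_eq_inner)
      moreover have "p = (x, z + k) + (0, -k)" by (simp add: p)
      ultimately show "p \<in> translate (0, -k) (hp Q k)"
        unfolding translate_def by blast
    qed
  qed
  then show "\<exists>v. translate v (hp Q k) = tangent_hyperplane Q" by blast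
qed

lemma tangent_hp:
  assumes "tangent_point T Q"
  shows "\<exists>k. T = hp Q k"
proof -
  obtain v where v: "translate v T = tangent_hyperplane Q"
    using assms unfolding tangent_point_def by blast
  obtain a b where ab: "v = (a, b)" by (cases v)
  have "T = hp Q (2 * (Q \<bullet> a) - b)"
  proof (rule set_eqI)
    fix p :: "('a) upt"
    obtain x z where p: "p = (x, z)" by (cases p)
    have "p \<in> T \<longleftrightarrow> p + v \<in> translate v T"
      unfolding translate_def by auto
    also have "\<dots> \<longleftrightarrow> p \<in> hp Q (2 * (Q \<bullet> a) - b)"
      unfolding v by (auto simp add: p ab hp_def tangent_hyperplane_def inner_diff_right
          inner_add_right power2_norm_eq_inner algebra_simps)
    finally show "p \<in> T \<longleftrightarrow> p \<in> hp Q (2 * (Q \<bullet> a) - b)" .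
  qed
  then show ?thesis by blast
qed

lemma hp_not_parallel:
  assumes "Q \<noteq> Q'"
  shows "\<not> parallel (hp Q k) (hp Q' k')"
proof
  assume "parallel (hp Q k) (hp Q' k')"
  then obtain v where v: "hp Q' k' = translate v (hp Q k)" unfolding parallel_def by blast
  have mem: "(x, 2 * (Q \<bullet> x) - (norm Q)^2 + k) + v \<in> hp Q' k'" for x
    unfolding v translate_def by (rule imageI) (simp add: hp_def)
  obtain a b where ab: "v = (a, b)" by (cases v)
  have e: "2 * (Q \<bullet> x) - (norm Q)^2 + k + b = 2 * (Q' \<bullet> (x + a)) - (norm Q')^2 + k'" for x
    using mem[of x] by (simp add: ab hp_def)
  have "2 * (Q \<bullet> (Q - Q')) = 2 * (Q' \<bullet> (Q - Q'))"
    using e[of "Q - Q'"] e[of 0] by (simp add: inner_add_right)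
  then have "(Q - Q') \<bullet> (Q - Q') = 0" by (simp add: inner_diff_left inner_diff_right inner_commute)
  then show False using assms by simp
qed

lemma vproj_hp: "vproj (hp (Q i) a \<inter> hp (Q j) b) = {P. psi Q i j P = a - b}"
proof (rule set_eqI)
  fix P
  have key: "psi Q i j P = 2 * (Q j \<bullet> P) - 2 * (Q i \<bullet> P) + (norm (Q i))^2 - (norm (Q j))^2"
    unfolding psi_def dist_norm power2_norm_eq_inner
    by (simp add: inner_diff_left inner_diff_right inner_commute algebra_simps)
  show "P \<in> vproj (hp (Q i) a \<inter> hp (Q j) b) \<longleftrightarrow> P \<in> {P. psi Q i j P = a - b}"
  proof -
    have "P \<in> vproj (hp (Q i) a \<inter> hp (Q j) b) \<longleftrightarrow>
          2 * (Q i \<bullet> P) - (norm (Q i))^2 + a = 2 * (Q j \<bullet> P) - (norm (Q j))^2 + b"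
      unfolding vproj_def hp_def by (force simp: image_iff)
    then show ?thesis using key by auto
  qed
qed

lemma psi_swap: "psi Q j i P = - psi Q i j P"
  unfolding psi_def by simp

lemma sum_cyc:
  assumes "0 < m"
  shows "(\<Sum>t<m. f (Suc t mod m)) = (\<Sum>t<m. (f t :: real))"
proof -
  obtain m' where m: "m = Suc m'" using assms by (cases m) auto
  have "(\<Sum>t<Suc m'. f (Suc t mod Suc m')) = (\<Sum>t<m'. f (Suc t mod Suc m')) + f 0"
    by simp
  also have "(\<Sum>t<m'. f (Suc t mod Suc m')) = (\<Sum>t<m'. f (Suc t))"
    by (rule sum.cong) auto
  also have "(\<Sum>t<m'. f (Suc t)) + f 0 = (\<Sum>t<Suc m'. f t)"
    by (subst sum.lessThan_Suc_shift) simp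
  finally show ?thesis using m by simp
qed

lemma telesc:
  assumes "0 < m"
  shows "(\<Sum>t<m. (c t - c (Suc t mod m) :: real)) = 0"
  using sum_cyc[OF assms, of c] by (simp add: sum_subtractf)


lemma gain_pot:
  assumes "\<And>e. g e = c (fst (ends e)) - c (snd (ends e))" "joins ends e i j"
  shows "gain ends g e i j = c i - c j"
  using assms unfolding gain_def joins_def by auto

lemma gain_swap: "joins ends e i j \<Longrightarrow> i \<noteq> j \<Longrightarrow> gain ends g e j i = - gain ends g e i j"
  unfolding gain_def joins_def by auto

lemma gain_ends: "ends e = (a, b) \<Longrightarrow> gain ends g e a b = g e"
  unfolding gain_def by auto

lemma all_less2: "(\<forall>k<(2::nat). P k) \<longleftrightarrow> P 0 \<and> P 1"
  by (auto simp: less_Suc_eq numeral_2_eq_2)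

lemma all_less3: "(\<forall>k<(3::nat). P k) \<longleftrightarrow> P 0 \<and> P 1 \<and> P 2"
  by (auto simp: less_Suc_eq numeral_3_eq_3 numeral_2_eq_2)

lemma sum_less2: "(\<Sum>k<(2::nat). f k) = f 0 + (f 1 :: real)"
  by (simp add: numeral_2_eq_2)

lemma sum_less3: "(\<Sum>k<(3::nat). f k) = f 0 + f 1 + (f 2 :: real)"
  by (simp add: numeral_3_eq_3 numeral_2_eq_2)

lemma circ2:
  assumes "balanced E ends g" "e1 \<in> E" "e2 \<in> E" "e1 \<noteq> e2" "a \<noteq> b"
    "joins ends e1 a b" "joins ends e2 b a"
  shows "gain ends g e1 a b + gain ends g e2 b a = 0"
proof -
  have c: "is_circle E ends [a, b] [e1, e2]"
    unfolding is_circle_def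
    apply (simp only: list.size numeral_2_eq_2[symmetric] add_0 One_nat_def[symmetric] one_add_one)
    using assms by (simp add: all_less2)
  have "(\<Sum>k < length [a,b]. gain ends g ([e1,e2] ! k) ([a,b] ! k) ([a,b] ! (Suc k mod length [a,b]))) = 0"
    using assms(1) c unfolding balanced_def by blast
  then show ?thesis
    by (simp only: list.size numeral_2_eq_2[symmetric] add_0 One_nat_def[symmetric] one_add_one sum_less2) simp
qed

lemma circ3:
  assumes "balanced E ends g" "e1 \<in> E" "e2 \<in> E" "e3 \<in> E" "e1 \<noteq> e2" "e1 \<noteq> e3" "e2 \<noteq> e3"
    "a \<noteq> b" "b \<noteq> c" "a \<noteq> c"
    "joins ends e1 a b" "joins ends e2 b c" "joins ends e3 c a"
  shows "gain ends g e1 a b + gain ends g e2 b c + gain ends g e3 c a = 0"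
proof -
  have l: "length [a, b, c] = 3" by simp
  have c: "is_circle E ends [a, b, c] [e1, e2, e3]"
    unfolding is_circle_def l
    using assms by (simp add: all_less3)
  have "(\<Sum>k < length [a,b,c]. gain ends g ([e1,e2,e3] ! k) ([a,b,c] ! k) ([a,b,c] ! (Suc k mod length [a,b,c]))) = 0"
    using assms(1) c unfolding balanced_def by blast
  then show ?thesis unfolding l sum_less3 by simp
qed

lemma potential:
  assumes gg: "gain_graph n E ends" and bal: "balanced E ends g" and cp: "complete_gg n E ends"
  shows "\<exists>c. \<forall>e\<in>E. g e = c (fst (ends e)) - c (snd (ends e))"
proof -
  define ei where "ei i = (SOME e. e \<in> E \<and> joins ends e i 1)" for i
  define c where "c i = (if i = 1 then 0 else gain ends g (ei i) i 1)" for i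
  have eiP: "ei i \<in> E \<and> joins ends (ei i) i 1" if "i \<in> {1..n}" "i \<noteq> 1" for i
  proof -
    have "1 \<in> {1..n}" using that by auto
    then have "\<exists>e\<in>E. joins ends e i 1" using cp that unfolding complete_gg_def by blast
    then have "\<exists>e. e \<in> E \<and> joins ends e i 1" by blast
    then show ?thesis unfolding ei_def by (rule someI_ex)
  qed
  have key: "g e = c a - c b" if e: "e \<in> E" "ends e = (a, b)" for e a b
  proof -
    have "fst (ends e) \<noteq> snd (ends e) \<and> fst (ends e) \<in> {1..n} \<and> snd (ends e) \<in> {1..n}"
      using gg e(1) unfolding gain_graph_def by blast
    then have ab: "a \<noteq> b" "a \<in> {1..n}" "b \<in> {1..n}" using e(2) by simp_all
    have je: "joins ends e a b" using e unfolding joins_def by simp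
    have c1: "c 1 = 0" by (simp add: c_def)
    have ge: "gain ends g e a b = g e" using e(2) by (simp add: gain_def)
    show ?thesis
    proof (cases "a = 1")
      case True
      then have b1: "b \<noteq> 1" using ab by simp
      note eb = eiP[OF ab(3) b1]
      have cb: "c b = gain ends g (ei b) b 1" using b1 by (simp add: c_def)
      show ?thesis
      proof (cases "e = ei b")
        case True
        have "gain ends g e b a = - g e" using gain_swap[OF je ab(1)] ge by simp
        then show ?thesis using cb True \<open>a = 1\<close> c1 by simp
      next
        case False
        have "gain ends g e 1 b + gain ends g (ei b) b 1 = 0"
          using circ2[OF bal e(1) conjunct1[OF eb] False _ _ conjunct2[OF eb]] b1 je \<open>a = 1\<close> by simp
        then show ?thesis using cb ge \<open>a = 1\<close> c1 by simp
      qed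
    next
      case a1: False
      note ea = eiP[OF ab(2) a1]
      have ca: "c a = gain ends g (ei a) a 1" using a1 by (simp add: c_def)
      have j3: "joins ends (ei a) 1 a" using ea unfolding joins_def by auto
      show ?thesis
      proof (cases "b = 1")
        case True
        show ?thesis
        proof (cases "e = ei a")
          case True
          then show ?thesis using ca ge \<open>b = 1\<close> c1 by simp
        next
          case False
          have "gain ends g e a 1 + gain ends g (ei a) 1 a = 0"
            using circ2[OF bal e(1) conjunct1[OF ea] False a1 _ j3] je \<open>b = 1\<close> by simp
          moreover have "gain ends g (ei a) 1 a = - gain ends g (ei a) a 1"
            by (rule gain_swap[OF conjunct2[OF ea] a1])
          ultimately show ?thesis using ca ge \<open>b = 1\<close> c1 by simp
        qed
      next
        case b1: False
        note eb = eiP[OF ab(3) b1]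
        have cb: "c b = gain ends g (ei b) b 1" using b1 by (simp add: c_def)
        have d1: "e \<noteq> ei b" using eb e(2) ab(1) a1 unfolding joins_def by auto
        have d2: "e \<noteq> ei a" using ea e(2) ab(1) b1 unfolding joins_def by auto
        have d3: "ei b \<noteq> ei a" using ea eb ab(1) a1 b1 unfolding joins_def by auto
        have "gain ends g e a b + gain ends g (ei b) b 1 + gain ends g (ei a) 1 a = 0"
          using circ3[OF bal e(1) conjunct1[OF eb] conjunct1[OF ea] d1 d2 d3 ab(1) b1 a1 je conjunct2[OF eb] j3] .
        moreover have "gain ends g (ei a) 1 a = - gain ends g (ei a) a 1"
          by (rule gain_swap[OF conjunct2[OF ea] a1])
        ultimately show ?thesis using ca cb ge by simp
      qed
    qed
  qed
  have "\<forall>e\<in>E. g e = c (fst (ends e)) - c (snd (ends e))"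
  proof
    fix e assume "e \<in> E"
    then show "g e = c (fst (ends e)) - c (snd (ends e))" by (rule key) simp
  qed
  then show ?thesis by (rule exI[of _ c])
qed


lemma partA:
  fixes T :: "nat \<Rightarrow> ('d::finite) upt set" and Q :: "nat \<Rightarrow> ('d::finite) pt"
  assumes H: "\<forall>i\<in>{1..n}. affine_hyperplane (T i) \<and> nonvertical (T i) \<and> tangent_point (T i) (Q i)"
  shows "\<exists>(E::nat set) ends g. gain_graph n E ends \<and> balanced E ends g \<and> complete_gg n E ends \<and>
             derived_arrangement n T = pyth_arrangement E ends g Q"
proof -
  have "\<forall>i\<in>{1..n}. \<exists>k. T i = hp (Q i) k" using H tangent_hp by blast
  from bchoice[OF this] obtain k where k: "\<forall>i\<in>{1..n}. T i = hp (Q i) (k i)" by blast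
  define ends :: "nat \<Rightarrow> nat \<times> nat" where "ends = prod_decode"
  define E where "E = prod_encode ` {(i, j). 1 \<le> i \<and> i < j \<and> j \<le> n}"
  define g where "g e = k (fst (ends e)) - k (snd (ends e))" for e
  have gg: "gain_graph n E ends"
    unfolding gain_graph_def
  proof
    have "{(i, j). 1 \<le> i \<and> i < j \<and> j \<le> n} \<subseteq> {1..n} \<times> {1..n}" by auto
    then show "finite E" unfolding E_def by (meson finite_SigmaI finite_atLeastAtMost finite_imageI finite_subset)
    show "\<forall>e\<in>E. fst (ends e) \<noteq> snd (ends e) \<and> fst (ends e) \<in> {1..n} \<and> snd (ends e) \<in> {1..n}"
      unfolding E_def ends_def by auto
  qed
  have bal: "balanced E ends g"
    unfolding balanced_def
  proof (intro allI impI)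
    fix vs es assume c: "is_circle E ends vs es"
    let ?m = "length vs"
    have m: "0 < ?m" using c unfolding is_circle_def by auto
    have "(\<Sum>t<?m. gain ends g (es ! t) (vs ! t) (vs ! (Suc t mod ?m))) =
          (\<Sum>t<?m. k (vs ! t) - k (vs ! (Suc t mod ?m)))"
      by (rule sum.cong[OF refl], rule gain_pot[of g k ends]) (use c in \<open>auto simp: g_def is_circle_def\<close>)
    also have "\<dots> = 0" using telesc[OF m, of "\<lambda>t. k (vs ! t)"] by simp
    finally show "(\<Sum>t<?m. gain ends g (es ! t) (vs ! t) (vs ! (Suc t mod ?m))) = 0" .
  qed
  have cp: "complete_gg n E ends"
    unfolding complete_gg_def
  proof (intro ballI impI)
    fix i j assume ij: "i \<in> {1..n}" "j \<in> {1..n}" "i \<noteq> j"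
    show "\<exists>e\<in>E. joins ends e i j"
    proof (cases "i < j")
      case True
      then show ?thesis using ij by (intro bexI[of _ "prod_encode (i, j)"]) (auto simp: E_def ends_def joins_def)
    next
      case False
      then show ?thesis using ij by (intro bexI[of _ "prod_encode (j, i)"]) (auto simp: E_def ends_def joins_def)
    qed
  qed
  define Hs where "Hs = {{P. psi Q i j P = k i - k j} | i j. 1 \<le> i \<and> i < j \<and> j \<le> n}"
  have d: "derived_arrangement n T = Hs"
    unfolding derived_arrangement_def Hs_def
  proof (intro Collect_cong ex_cong1 ex_cong1)
    fix x i j
    show "(x = vproj (T i \<inter> T j) \<and> 1 \<le> i \<and> i < j \<and> j \<le> n) =
          (x = {P. psi Q i j P = k i - k j} \<and> 1 \<le> i \<and> i < j \<and> j \<le> n)"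
      using k vproj_hp[of Q i "k i" j "k j"] by auto
  qed
  have p: "pyth_arrangement E ends g Q = Hs"
    unfolding pyth_arrangement_def Hs_def E_def g_def ends_def
    apply auto
     apply blast
    apply (rule_tac x="prod_encode (i, j)" in exI)
    apply auto
    done
  have dp: "derived_arrangement n T = pyth_arrangement E ends g Q" using d p by simp
  show ?thesis by (intro exI[of _ E] exI[of _ ends] exI[of _ g] conjI gg bal cp dp)
qed

lemma partB:
  fixes Q :: "nat \<Rightarrow> ('d::finite) pt" and E :: "'e set"
  assumes gg: "gain_graph n E ends" and bal: "balanced E ends g" and cp: "complete_gg n E ends"
    and inj: "inj_on Q {1..n}"
  shows "\<exists>T::nat \<Rightarrow> ('d::finite) upt set.
             (\<forall>i\<in>{1..n}. affine_hyperplane (T i) \<and> nonvertical (T i) \<and> tangent_point (T i) (Q i)) \<and>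
             (\<forall>i\<in>{1..n}. \<forall>j\<in>{1..n}. i \<noteq> j \<longrightarrow> \<not> parallel (T i) (T j)) \<and>
             pyth_arrangement E ends g Q = derived_arrangement n T"
proof -
  obtain k where k: "\<forall>e\<in>E. g e = k (fst (ends e)) - k (snd (ends e))"
    using potential[OF gg bal cp] by blast
  define T where "T i = hp (Q i) (k i)" for i
  have 1: "\<forall>i\<in>{1..n}. affine_hyperplane (T i) \<and> nonvertical (T i) \<and> tangent_point (T i) (Q i)"
    unfolding T_def using hp_aff hp_nonvertical hp_tangent by blast
  have 2: "\<forall>i\<in>{1..n}. \<forall>j\<in>{1..n}. i \<noteq> j \<longrightarrow> \<not> parallel (T i) (T j)"
  proof (intro ballI impI)
    fix i j assume ij: "i \<in> {1..n}" "j \<in> {1..n}" "i \<noteq> j"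
    then have "Q i \<noteq> Q j" using inj unfolding inj_on_def by blast
    then show "\<not> parallel (T i) (T j)" unfolding T_def by (rule hp_not_parallel)
  qed
  define Hs where "Hs = {{P. psi Q i j P = k i - k j} | i j. 1 \<le> i \<and> i < j \<and> j \<le> n}"
  have d: "derived_arrangement n T = Hs"
    unfolding derived_arrangement_def Hs_def
  proof (intro Collect_cong ex_cong1 ex_cong1)
    fix x i j
    show "(x = vproj (T i \<inter> T j) \<and> 1 \<le> i \<and> i < j \<and> j \<le> n) =
          (x = {P. psi Q i j P = k i - k j} \<and> 1 \<le> i \<and> i < j \<and> j \<le> n)"
      using vproj_hp[of Q i "k i" j "k j"] unfolding T_def by simp
  qed
  have p: "pyth_arrangement E ends g Q = Hs"
  proof (rule set_eqI)
    fix X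
    show "X \<in> pyth_arrangement E ends g Q \<longleftrightarrow> X \<in> Hs"
    proof
      assume "X \<in> pyth_arrangement E ends g Q"
      then obtain e where e: "e \<in> E" "X = {P. psi Q (fst (ends e)) (snd (ends e)) P = g e}"
        unfolding pyth_arrangement_def by blast
      obtain a b where ab: "ends e = (a, b)" by (cases "ends e")
      have "fst (ends e) \<noteq> snd (ends e) \<and> fst (ends e) \<in> {1..n} \<and> snd (ends e) \<in> {1..n}"
        using gg e(1) unfolding gain_graph_def by blast
      then have abn: "a \<noteq> b" "a \<in> {1..n}" "b \<in> {1..n}" using ab by simp_all
      have X: "X = {P. psi Q a b P = k a - k b}" using e ab k by simp
      show "X \<in> Hs"
      proof (cases "a < b")
        case True then show ?thesis using X abn unfolding Hs_def by auto
      next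
        case False
        have "X = {P. psi Q b a P = k b - k a}" unfolding X using psi_swap[of Q b a] by force
        moreover have "1 \<le> b" "b < a" "a \<le> n" using False abn by auto
        ultimately show ?thesis unfolding Hs_def by blast
      qed
    next
      assume "X \<in> Hs"
      then obtain i j where ij: "1 \<le> i" "i < j" "j \<le> n" "X = {P. psi Q i j P = k i - k j}"
        unfolding Hs_def by blast
      have "i \<in> {1..n}" "j \<in> {1..n}" "i \<noteq> j" using ij by auto
      then obtain e where e: "e \<in> E" "joins ends e i j" using cp unfolding complete_gg_def by blast
      have ge: "g e = k (fst (ends e)) - k (snd (ends e))" using k e by blast
      show "X \<in> pyth_arrangement E ends g Q"
        unfolding pyth_arrangement_def
      proof (rule CollectI, rule exI[of _ e], intro conjI e(1))
        show "X = {P. psi Q (fst (ends e)) (snd (ends e)) P = g e}"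
        proof (cases "ends e = (i, j)")
          case True then show ?thesis using ij ge by simp
        next
          case False
          then have "ends e = (j, i)" using e unfolding joins_def by blast
          then show ?thesis using ij ge psi_swap[of Q i j] by force
        qed
      qed
    qed
  qed
  have dp: "pyth_arrangement E ends g Q = derived_arrangement n T" using d p by simp
  show ?thesis by (intro exI[of _ T] conjI 1 2 dp)
qed

theorem proposition9p2:
  shows
  "(\<forall>(n::nat) (T::nat \<Rightarrow> ('d::finite) upt set) (Q::nat \<Rightarrow> ('d::finite) pt).
      (\<forall>i\<in>{1..n}. affine_hyperplane (T i) \<and> nonvertical (T i) \<and> tangent_point (T i) (Q i)) \<and>
      (\<forall>i\<in>{1..n}. \<forall>j\<in>{1..n}. i \<noteq> j \<longrightarrow> \<not> parallel (T i) (T j))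
      \<longrightarrow> (\<exists>(E::nat set) ends g. gain_graph n E ends \<and> balanced E ends g \<and> complete_gg n E ends \<and>
             derived_arrangement n T = pyth_arrangement E ends g Q))
   \<and>
   (\<forall>(n::nat) (E::'e set) ends g (Q::nat \<Rightarrow> ('d::finite) pt).
      gain_graph n E ends \<and> balanced E ends g \<and> complete_gg n E ends \<and> inj_on Q {1..n}
      \<longrightarrow> (\<exists>T::nat \<Rightarrow> ('d::finite) upt set.
             (\<forall>i\<in>{1..n}. affine_hyperplane (T i) \<and> nonvertical (T i) \<and> tangent_point (T i) (Q i)) \<and>
             (\<forall>i\<in>{1..n}. \<forall>j\<in>{1..n}. i \<noteq> j \<longrightarrow> \<not> parallel (T i) (T j)) \<and>
             pyth_arrangement E ends g Q = derived_arrangement n T))"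
  apply (intro conjI allI impI)
   apply (rule partA, blast)
  apply (rule partB; blast)
  done

end
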